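(* Let $\mathcal{P}$ be a partition of $\{1,\dots,n\}$ and $\mathcal{U}$ a subspace of $\mathbb{R}^n$. If $\mu_{\mathcal{P}}(\mathcal{U})<1/2$ then $\mathcal{U}$ is $\mathcal{P}$-realizable.
   Context: $P_{\mathcal{U}}$ is the orthogonal projector onto $\mathcal{U}$. For $\mathcal{I}\subseteq\{1,\dots,n\}$, $S^{\mathcal{I}}=\{x\in\mathbb{R}^n:\|x\|_2=1,\ x_j=0\text{ for }j\notin\mathcal{I}\}$. The $\mathcal{P}$-coherence is $\mu_{\mathcal{P}}(\mathcal{U})=\max_{\mathcal{I}\in\mathcal{P}}\max_{x\in S^{\mathcal{I}}}\|P_{\mathcal{U}}x\|_2^2$. $\mathcal{E}_{\mathcal{P}}=\{Y\succeq0: Y_{\mathcal{I}}=I\text{ for all }\mathcal{I}\in\mathcal{P}\}$ ($Y_{\mathcal{I}}$ the principal submatrix indexed by $\mathcal{I}$); $\mathcal{U}$ is $\mathcal{P}$-realizable if some $Y\in\mathcal{E}_{\mathcal{P}}$ has nullspace containing $\mathcal{U}$. *)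

theory Defs
  imports "HOL-Analysis.Analysis"
begin

text \<open>Coordinates of R^n are indexed by the finite type 'n (playing the role of {1..n}).\<close>

definition orth_proj :: "(real^'n) set \<Rightarrow> real^'n \<Rightarrow> real^'n" where
  "orth_proj U x = (THE p. p \<in> U \<and> (\<forall>u\<in>U. (x - p) \<bullet> u = 0))"

definition is_partition :: "'n set set \<Rightarrow> bool" where
  "is_partition P \<longleftrightarrow> (\<forall>I\<in>P. I \<noteq> {}) \<and> (\<forall>I\<in>P. \<forall>J\<in>P. I \<noteq> J \<longrightarrow> I \<inter> J = {}) \<and> \<Union>P = UNIV"

definition sphere_supp :: "'n set \<Rightarrow> (real^'n) set" where
  "sphere_supp I = {x. norm x = 1 \<and> (\<forall>j. j \<notin> I \<longrightarrow> x $ j = 0)}"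

text \<open>P-coherence (the maximum is attained by compactness; we write it as a supremum).\<close>
definition coherence :: "'n set set \<Rightarrow> (real^'n) set \<Rightarrow> real" where
  "coherence P U = (SUP x \<in> (\<Union>I\<in>P. sphere_supp I). (norm (orth_proj U x))\<^sup>2)"

definition psd :: "real^'n^'n \<Rightarrow> bool" where
  "psd Y \<longleftrightarrow> transpose Y = Y \<and> (\<forall>x. 0 \<le> x \<bullet> (Y *v x))"

definition elliptope_P :: "'n set set \<Rightarrow> (real^'n^'n) set" where
  "elliptope_P P = {Y. psd Y \<and> (\<forall>I\<in>P. \<forall>i\<in>I. \<forall>j\<in>I. Y $ i $ j = (if i = j then 1 else 0))}"

definition realizable :: "'n set set \<Rightarrow> (real^'n) set \<Rightarrow> bool" where
  "realizable P U \<longleftrightarrow> (\<exists>Y\<in>elliptope_P P. \<forall>u\<in>U. Y *v u = 0)"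

end

theory Submission
  imports Defs
begin


definition blk :: "'n set set \<Rightarrow> 'n \<Rightarrow> 'n \<Rightarrow> bool" where
  "blk P i j \<longleftrightarrow> (\<exists>I\<in>P. i \<in> I \<and> j \<in> I)"

definition bd :: "'n::finite set set \<Rightarrow> real^'n^'n \<Rightarrow> real^'n^'n" where
  "bd P X = (\<chi> i j. (if blk P i j then 1 else 0) * X$i$j)"

definition msk :: "'n::finite set \<Rightarrow> real^'n \<Rightarrow> real^'n" where
  "msk I x = (\<chi> i. (if i \<in> I then 1 else 0) * x$i)"

definition qf :: "real^'n::finite^'n \<Rightarrow> real^'n \<Rightarrow> real" where
  "qf M x = x \<bullet> (M *v x)"

lemma part_disj: "is_partition P \<Longrightarrow> I \<in> P \<Longrightarrow> J \<in> P \<Longrightarrow> I \<noteq> J \<Longrightarrow> I \<inter> J = {}"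
  unfolding is_partition_def by simp

lemma blk_mem: assumes "is_partition P" "I \<in> P" "i \<in> I" shows "blk P i j \<longleftrightarrow> j \<in> I"
proof
  assume "blk P i j"
  then obtain J where J: "J \<in> P" "i \<in> J" "j \<in> J" unfolding blk_def by auto
  have "I = J"
  proof (rule ccontr)
    assume "I \<noteq> J"
    then have "I \<inter> J = {}" using assms(1,2) J(1) unfolding is_partition_def by auto
    then show False using assms(3) J(2) by auto
  qed
  then show "j \<in> I" using J by simp
next
  assume "j \<in> I" then show "blk P i j" using assms unfolding blk_def by auto
qed

lemma blk_refl: assumes "is_partition P" shows "blk P i i"
proof -
  have "i \<in> \<Union>P" using assms unfolding is_partition_def by auto
  then show ?thesis unfolding blk_def by auto
qed

lemma blk_sym: "blk P i j \<Longrightarrow> blk P j i"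
  unfolding blk_def by auto

lemma blk_trans: assumes "is_partition P" "blk P i j" "blk P j k" shows "blk P i k"
proof -
  obtain I where I: "I \<in> P" "i \<in> I" "j \<in> I" using assms(2) unfolding blk_def by auto
  then have "k \<in> I" using blk_mem[OF assms(1) I(1) I(3)] assms(3) by simp
  then show ?thesis using I unfolding blk_def by auto
qed

lemma sum_blocks:
  assumes "is_partition P"
  shows "(\<Sum>I\<in>(P::'n::finite set set). if i \<in> I \<and> j \<in> I then (a::real) else 0) = (if blk P i j then a else 0)"
proof (cases "blk P i j")
  case True
  then obtain I0 where I0: "I0 \<in> P" "i \<in> I0" "j \<in> I0" unfolding blk_def by auto
  have eq: "(if i \<in> I \<and> j \<in> I then a else 0) = (if I = I0 then a else 0)" if "I \<in> P" for I
  proof (cases "i \<in> I")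
    case True
    then have "I0 \<in> P \<and> i \<in> I0" using I0 by simp
    have "I = I0"
    proof (rule ccontr)
      assume "I \<noteq> I0"
      then have "I \<inter> I0 = {}" using part_disj[OF assms that I0(1)] by simp
      then show False using True I0(2) by auto
    qed
    then show ?thesis using I0 by simp
  next
    case False
    then show ?thesis using I0 by auto
  qed
  have "(\<Sum>I\<in>P. if i \<in> I \<and> j \<in> I then a else 0) = (\<Sum>I\<in>P. if I = I0 then a else 0)"
    by (rule sum.cong[OF refl eq])
  also have "\<dots> = a" using I0(1) by simp
  finally show ?thesis using True by simp
next
  case False
  have "\<forall>I\<in>P. (if i \<in> I \<and> j \<in> I then a else 0) = 0"
    using False unfolding blk_def by auto
  then show ?thesis using False by (simp only: sum.neutral if_False)
qed

lemma qf_bd: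
  assumes "is_partition P"
  shows "qf (bd P M) x = (\<Sum>I\<in>P. qf M (msk I x))"
proof -
  have "(\<Sum>I\<in>P. qf M (msk I x)) = (\<Sum>I\<in>P. \<Sum>i\<in>UNIV. \<Sum>j\<in>UNIV. if i \<in> I \<and> j \<in> I then x$i * M$i$j * x$j else 0)"
    unfolding qf_def msk_def inner_vec_def matrix_vector_mult_def
    by (auto simp: sum_distrib_left intro!: sum.cong)
  also have "\<dots> = (\<Sum>i\<in>UNIV. \<Sum>j\<in>UNIV. \<Sum>I\<in>P. if i \<in> I \<and> j \<in> I then x$i * M$i$j * x$j else 0)"
    by (subst sum.swap, subst (2) sum.swap, rule refl)
  also have "\<dots> = (\<Sum>i\<in>UNIV. \<Sum>j\<in>UNIV. if blk P i j then x$i * M$i$j * x$j else 0)"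
    using sum_blocks[OF assms] by simp
  also have "\<dots> = qf (bd P M) x"
    unfolding qf_def bd_def inner_vec_def matrix_vector_mult_def
    by (auto simp: sum_distrib_left intro!: sum.cong)
  finally show ?thesis by simp
qed


lemma bd_nth: "bd P X $ i $ j = (if blk P i j then X$i$j else 0)"
  unfolding bd_def by simp

lemma msk_nth: "msk I x $ i = (if i \<in> I then x$i else 0)"
  unfolding msk_def by simp

lemma bd_idem: "bd P (bd P X) = bd P X"
  by (simp add: vec_eq_iff bd_nth)

lemma bd_add: "bd P (X + Y) = bd P X + bd P Y"
  by (simp add: vec_eq_iff bd_nth)

lemma bd_diff: "bd P (X - Y) = bd P X - bd P Y"
  by (simp add: vec_eq_iff bd_nth)

lemma bd_scaleR: "bd P (c *\<^sub>R X) = c *\<^sub>R bd P X"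
  by (simp add: vec_eq_iff bd_nth)

lemma bd_mat1: "is_partition P \<Longrightarrow> bd P (mat 1) = mat 1"
  by (simp add: vec_eq_iff bd_nth mat_def blk_refl)

lemma bd_zero: "bd P 0 = 0"
  by (simp add: vec_eq_iff bd_nth)

lemma transpose_bd: "transpose (bd P X) = bd P (transpose X)"
  by (auto simp add: vec_eq_iff bd_nth transpose_def intro: blk_sym)

lemma bd_entry: "bd P D = D \<Longrightarrow> D$k$j = (if blk P k j then D$k$j else 0)"
  by (metis bd_nth)

lemma bd_mult_right:
  assumes P: "is_partition P" and D: "bd P D = D"
  shows "bd P (X ** D) = bd P X ** D"
proof -
  have "(if blk P i j then X$i$k * D$k$j else 0) = (if blk P i k then X$i$k else 0) * D$k$j" for i j k
  proof (cases "blk P k j")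
    case True
    then have "blk P i j \<longleftrightarrow> blk P i k" using blk_trans[OF P] blk_sym by metis
    then show ?thesis by simp
  next
    case False
    then have "D$k$j = 0" using bd_entry[OF D, of k j] by simp
    then show ?thesis by simp
  qed
  note pt = this
  have "(bd P (X ** D))$i$j = (bd P X ** D)$i$j" for i j
  proof -
    have "(bd P (X ** D))$i$j = (\<Sum>k\<in>UNIV. if blk P i j then X$i$k * D$k$j else 0)"
      by (cases "blk P i j") (simp_all add: bd_nth matrix_matrix_mult_def)
    also have "\<dots> = (\<Sum>k\<in>UNIV. (if blk P i k then X$i$k else 0) * D$k$j)"
      using pt by simp
    also have "\<dots> = (bd P X ** D)$i$j"
      by (simp add: bd_nth matrix_matrix_mult_def)
    finally show ?thesis .
  qed
  then show ?thesis by (simp add: vec_eq_iff)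
qed


lemma bd_mult_left:
  assumes P: "is_partition P" and D: "bd P D = D"
  shows "bd P (D ** X) = D ** bd P X"
proof -
  have pt: "(if blk P i j then D$i$k * X$k$j else 0) = D$i$k * (if blk P k j then X$k$j else 0)" for i j k
  proof (cases "blk P i k")
    case True
    then have "blk P i j \<longleftrightarrow> blk P k j" using blk_trans[OF P] blk_sym by metis
    then show ?thesis by simp
  next
    case False
    then have "D$i$k = 0" using bd_entry[OF D, of i k] by simp
    then show ?thesis by simp
  qed
  have "(bd P (D ** X))$i$j = (D ** bd P X)$i$j" for i j
  proof -
    have "(bd P (D ** X))$i$j = (\<Sum>k\<in>UNIV. if blk P i j then D$i$k * X$k$j else 0)"
      by (cases "blk P i j") (simp_all add: bd_nth matrix_matrix_mult_def)
    also have "\<dots> = (\<Sum>k\<in>UNIV. D$i$k * (if blk P k j then X$k$j else 0))"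
      using pt by simp
    also have "\<dots> = (D ** bd P X)$i$j"
      by (simp add: bd_nth matrix_matrix_mult_def)
    finally show ?thesis .
  qed
  then show ?thesis by (simp add: vec_eq_iff)
qed

lemma axis_mat_axis: "axis i 1 \<bullet> ((A::real^'n::finite^'n) *v axis j 1) = A$i$j"
  by (simp add: matrix_vector_mult_basis column_def inner_axis')

lemma sym_dot: "transpose A = (A::real^'n::finite^'n) \<Longrightarrow> x \<bullet> (A *v y) = (A *v x) \<bullet> y"
  by (metis dot_lmul_matrix inner_commute transpose_matrix_vector)

lemma sym_from_dot:
  assumes "\<And>x y. x \<bullet> ((A::real^'n::finite^'n) *v y) = (A *v x) \<bullet> y"
  shows "transpose A = A"
proof -
  have "A$j$i = A$i$j" for i j
    using assms[of "axis i 1" "axis j 1"] by (simp add: axis_mat_axis inner_commute)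
  then show ?thesis by (simp add: vec_eq_iff transpose_def)
qed

lemma qf_mult3:
  assumes "transpose R = (R::real^'n::finite^'n)"
  shows "qf (R ** M ** R) x = qf M (R *v x)"
  unfolding qf_def using sym_dot[OF assms]
  by (simp add: matrix_vector_mul_assoc[symmetric])

lemma qf_add_vec: "qf M (a + b) = qf M a + qf M b + a \<bullet> (M *v b) + b \<bullet> (M *v a)"
  unfolding qf_def by (simp add: matrix_vector_right_distrib inner_add_left inner_add_right)

lemma qf_mat1: "qf (mat 1) x = x \<bullet> x"
  unfolding qf_def by simp

lemma qf_diff_mat: "qf (A - B) x = qf A x - qf B x"
  unfolding qf_def by (simp add: matrix_vector_mult_diff_rdistrib inner_diff_right)

lemma qf_lin: "qf (u *\<^sub>R A + v *\<^sub>R B) x = u * qf A x + v * qf B x"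
  unfolding qf_def by (simp add: matrix_vector_mult_add_rdistrib scaleR_matrix_vector_assoc[symmetric] inner_add_right)

lemma orth_proj_unique:
  assumes "subspace U" "p \<in> U" "\<forall>u\<in>U. (x - p) \<bullet> u = 0"
  shows "orth_proj U x = p"
  unfolding orth_proj_def
proof (rule the_equality)
  show "p \<in> U \<and> (\<forall>u\<in>U. (x - p) \<bullet> u = 0)" using assms by simp
next
  fix q assume q: "q \<in> U \<and> (\<forall>u\<in>U. (x - q) \<bullet> u = 0)"
  have d: "q - p \<in> U" using q assms subspace_diff by blast
  have "(q - p) \<bullet> (q - p) = (x - p) \<bullet> (q - p) - (x - q) \<bullet> (q - p)"
    by (simp add: inner_diff_left)
  also have "\<dots> = 0" using q assms(3) d by simp
  finally show "q = p" by simp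
qed

lemma orth_proj_char:
  assumes "subspace U"
  shows "orth_proj U x \<in> U \<and> (\<forall>u\<in>U. (x - orth_proj U x) \<bullet> u = 0)"
proof -
  obtain y z where yz: "y \<in> span U" "\<And>w. w \<in> span U \<Longrightarrow> orthogonal z w" "x = y + z"
    using orthogonal_subspace_decomp_exists[of U x] by blast
  have sp: "span U = U" using assms by (simp add: span_eq_iff)
  have "orth_proj U x = y"
    by (rule orth_proj_unique[OF assms]) (use yz sp in \<open>auto simp: orthogonal_def\<close>)
  then show ?thesis using yz sp by (auto simp: orthogonal_def)
qed


lemma orth_proj_in: "subspace U \<Longrightarrow> orth_proj U x \<in> U"
  using orth_proj_char by blast

lemma orth_proj_orth: "subspace U \<Longrightarrow> u \<in> U \<Longrightarrow> (x - orth_proj U x) \<bullet> u = 0"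
  using orth_proj_char by blast

lemma orth_proj_id: "subspace U \<Longrightarrow> u \<in> U \<Longrightarrow> orth_proj U u = u"
  by (rule orth_proj_unique) auto

lemma orth_proj_linear:
  assumes U: "subspace U"
  shows "linear (orth_proj U)"
proof (rule linearI)
  fix x y
  show "orth_proj U (x + y) = orth_proj U x + orth_proj U y"
  proof (rule orth_proj_unique[OF U])
    show "orth_proj U x + orth_proj U y \<in> U" using U orth_proj_in subspace_add by blast
    show "\<forall>u\<in>U. (x + y - (orth_proj U x + orth_proj U y)) \<bullet> u = 0"
    proof
      fix u assume "u \<in> U"
      then have "(x - orth_proj U x) \<bullet> u = 0" "(y - orth_proj U y) \<bullet> u = 0"
        using orth_proj_orth[OF U] by auto
      then show "(x + y - (orth_proj U x + orth_proj U y)) \<bullet> u = 0"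
        by (simp add: algebra_simps inner_diff_left inner_add_left)
    qed
  qed
next
  fix c :: real and x
  show "orth_proj U (c *\<^sub>R x) = c *\<^sub>R orth_proj U x"
  proof (rule orth_proj_unique[OF U])
    show "c *\<^sub>R orth_proj U x \<in> U" using U orth_proj_in subspace_scale by blast
    show "\<forall>u\<in>U. (c *\<^sub>R x - c *\<^sub>R orth_proj U x) \<bullet> u = 0"
    proof
      fix u assume "u \<in> U"
      then have "(x - orth_proj U x) \<bullet> u = 0" using orth_proj_orth[OF U] by auto
      then show "(c *\<^sub>R x - c *\<^sub>R orth_proj U x) \<bullet> u = 0"
        by (simp add: scaleR_diff_right[symmetric])
    qed
  qed
qed

lemma orth_proj_dot1:
  assumes U: "subspace U"
  shows "x \<bullet> orth_proj U y = orth_proj U x \<bullet> orth_proj U y"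
proof -
  have "(x - orth_proj U x) \<bullet> orth_proj U y = 0" using orth_proj_orth[OF U orth_proj_in[OF U]] .
  then show ?thesis by (simp add: inner_diff_left)
qed

lemma orth_proj_sym:
  assumes U: "subspace U"
  shows "x \<bullet> orth_proj U y = orth_proj U x \<bullet> y"
  using orth_proj_dot1[OF U, of x y] orth_proj_dot1[OF U, of y x] by (simp add: inner_commute)

lemma orth_proj_norm2:
  assumes U: "subspace U"
  shows "(norm (orth_proj U x))\<^sup>2 = x \<bullet> orth_proj U x"
  using orth_proj_dot1[OF U, of x x] by (simp add: power2_norm_eq_inner)

lemma orth_proj_le:
  assumes U: "subspace U"
  shows "norm (orth_proj U x) \<le> norm x"
proof -
  have "(norm (orth_proj U x))\<^sup>2 \<le> norm x * norm (orth_proj U x)"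
    using orth_proj_norm2[OF U, of x] Cauchy_Schwarz_ineq2[of x "orth_proj U x"] by simp
  show ?thesis
  proof (rule ccontr)
    assume "\<not> norm (orth_proj U x) \<le> norm x"
    then have "norm x * norm (orth_proj U x) < norm (orth_proj U x) * norm (orth_proj U x)"
      by (intro mult_strict_right_mono) auto
    then show False using \<open>(norm (orth_proj U x))\<^sup>2 \<le> _\<close> by (simp add: power2_eq_square)
  qed
qed


lemma msk_dot: "msk I a \<bullet> b = msk I a \<bullet> msk I b"
  by (auto simp: inner_vec_def msk_nth intro!: sum.cong)

lemma msk_dot2: "msk I a \<bullet> b = a \<bullet> msk I b"
  by (auto simp: inner_vec_def msk_nth intro!: sum.cong)

lemma msk_idem: "msk I (msk I a) = msk I a"
  by (simp add: vec_eq_iff msk_nth)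

lemma msk_diff_self: "msk I (z - msk I z) = 0"
  by (simp add: vec_eq_iff msk_nth)

lemma dot_split: "z \<bullet> z = msk I z \<bullet> msk I z + (z - msk I z) \<bullet> (z - msk I z)"
proof -
  have "msk I z \<bullet> (z - msk I z) = 0"
    by (simp add: msk_dot msk_diff_self)
  then show ?thesis
    by (simp add: inner_diff_left inner_diff_right inner_commute)
qed

lemma cross_zero:
  assumes P: "is_partition P" and D: "bd P D = D" and I: "I \<in> P"
    and a: "msk I a = a" and w: "msk I w = 0"
  shows "a \<bullet> (D *v w) = 0"
proof -
  have "a$i * (D$i$j * w$j) = 0" for i j
  proof (cases "i \<in> I")
    case True
    show ?thesis
    proof (cases "blk P i j")
      case True
      then have "j \<in> I" using blk_mem[OF P I \<open>i \<in> I\<close>] by simp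
      then have "w$j = 0" using w by (metis msk_nth zero_index)
      then show ?thesis by simp
    next
      case False
      then show ?thesis using bd_entry[OF D, of i j] by simp
    qed
  next
    case False
    then have "a$i = 0" using a by (metis msk_nth)
    then show ?thesis by simp
  qed
  note z = this
  show ?thesis
    unfolding inner_vec_def matrix_vector_mult_def by (simp add: sum_distrib_left z)
qed

lemma transpose_diff: "transpose (A - B) = transpose A - transpose (B::real^'n^'m)"
  by (simp add: transpose_def vec_eq_iff)

lemma transpose_add: "transpose (A + B) = transpose A + transpose (B::real^'n^'m)"
  by (simp add: transpose_def vec_eq_iff)

lemma mm_diff_left: "((A::real^'n::finite^'n) - B) ** C = A ** C - B ** C"
  by (simp add: matrix_matrix_mult_def vec_eq_iff sum_subtractf left_diff_distrib)

lemma mm_diff_right: "(A::real^'n::finite^'n) ** (B - C) = A ** B - A ** C"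
  by (simp add: matrix_matrix_mult_def vec_eq_iff sum_subtractf right_diff_distrib)

lemma mm_add_left: "((A::real^'n::finite^'n) + B) ** C = A ** C + B ** C"
  by (simp add: matrix_matrix_mult_def vec_eq_iff sum.distrib distrib_right)

lemma mm_add_right: "(A::real^'n::finite^'n) ** (B + C) = A ** B + A ** C"
  by (simp add: matrix_matrix_mult_def vec_eq_iff sum.distrib distrib_left)

lemma mm_scale_left: "(c *\<^sub>R (A::real^'n::finite^'n)) ** C = c *\<^sub>R (A ** C)"
  by (simp add: matrix_matrix_mult_def vec_eq_iff sum_distrib_left mult.assoc)

lemma mm_scale_right: "(A::real^'n::finite^'n) ** (c *\<^sub>R C) = c *\<^sub>R (A ** C)"
  by (simp add: matrix_matrix_mult_def vec_eq_iff sum_distrib_left mult.left_commute)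

lemma expand3: "(mat 1 - (A::real^'n::finite^'n)) ** D ** (mat 1 - A) = D - A ** D - D ** A + A ** D ** A"
  by (simp add: mm_diff_left mm_diff_right matrix_mul_assoc algebra_simps)

lemma qf_diff_vec: "qf M (a - b) = qf M a + qf M b - a \<bullet> (M *v b) - b \<bullet> (M *v a)"
  unfolding qf_def by (simp add: matrix_vector_mult_diff_distrib inner_diff_left inner_diff_right)

lemma cont_qf: "continuous_on S (\<lambda>D. qf D x)"
  unfolding qf_def inner_vec_def matrix_vector_mult_def
  by (intro continuous_intros)

lemma cont_bd: "continuous_on S (\<lambda>D. bd P D)"
  unfolding bd_def by (intro continuous_intros)

lemma cont_transpose: "continuous_on S (\<lambda>D::real^'n::finite^'n. transpose D)"
  unfolding transpose_def by (intro continuous_intros)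

locale realz =
  fixes P :: "'n::finite set set" and U :: "(real^'n) set"
  assumes part: "is_partition P" and sub: "subspace U"
    and coh: "coherence P U < 1/2"
begin

abbreviation "pr \<equiv> orth_proj U"
abbreviation "Bm \<equiv> matrix (orth_proj U)"
abbreviation "Bd \<equiv> bd P Bm"
abbreviation "Qd \<equiv> bd P (mat 1 - Bm)"

lemma Bm_mult: "Bm *v x = pr x"
  using matrix_vector_mul(2)[OF orth_proj_linear[OF sub]] by metis

lemma Bm_sym: "transpose Bm = Bm"
  by (rule sym_from_dot) (simp add: Bm_mult orth_proj_sym[OF sub])

lemma Bd_sym: "transpose Bd = Bd"
  by (simp add: transpose_bd Bm_sym)

lemma Qd_eq: "Qd = mat 1 - Bd"
  by (simp add: bd_diff bd_mat1[OF part])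

lemma Qd_sym: "transpose Qd = Qd"
  by (simp add: transpose_bd Bm_sym transpose_diff)

lemma qf_Bm: "qf Bm y = (norm (pr y))\<^sup>2"
  by (simp add: qf_def Bm_mult orth_proj_norm2[OF sub])

lemma sum_msk: "(\<Sum>I\<in>P. msk I x \<bullet> msk I x) = x \<bullet> x"
  using qf_bd[OF part, of "mat 1" x] by (simp add: bd_mat1[OF part] qf_mat1)

lemma coh_bound:
  assumes I: "I \<in> P"
  shows "(norm (pr (msk I x)))\<^sup>2 \<le> coherence P U * (msk I x \<bullet> msk I x)"
proof (cases "msk I x = 0")
  case True
  have "pr 0 = 0" using linear_0[OF orth_proj_linear[OF sub]] .
  then show ?thesis using True by simp
next
  case False
  let ?y = "msk I x" let ?S = "\<Union>I\<in>P. sphere_supp I"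
  define z where "z = (1 / norm ?y) *\<^sub>R ?y"
  have ny: "norm ?y > 0" using False by simp
  have "z \<in> sphere_supp I"
    unfolding sphere_supp_def z_def using ny by (auto simp: msk_nth)
  then have zS: "z \<in> ?S" using I by blast
  have bdd: "bdd_above ((\<lambda>x. (norm (pr x))\<^sup>2) ` ?S)"
  proof (rule bdd_aboveI2)
    fix w assume "w \<in> ?S"
    then have "norm w = 1" unfolding sphere_supp_def by auto
    then show "(norm (pr w))\<^sup>2 \<le> 1"
      using orth_proj_le[OF sub, of w] by (simp add: power_le_one)
  qed
  have "(norm (pr z))\<^sup>2 \<le> coherence P U"
    unfolding coherence_def using cSUP_upper[OF zS bdd] .
  moreover have "pr z = (1 / norm ?y) *\<^sub>R pr ?y"
    unfolding z_def using linear_scale[OF orth_proj_linear[OF sub]] by simp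
  ultimately have "(norm (pr ?y))\<^sup>2 / (norm ?y)\<^sup>2 \<le> coherence P U"
    by (simp add: power_divide)
  then have "(norm (pr ?y))\<^sup>2 \<le> coherence P U * (norm ?y)\<^sup>2"
    using ny by (simp add: divide_le_eq)
  then show ?thesis by (simp add: power2_norm_eq_inner)
qed

lemma qf_Bd_le: "qf Bd x \<le> coherence P U * (x \<bullet> x)"
proof -
  have "qf Bd x = (\<Sum>I\<in>P. (norm (pr (msk I x)))\<^sup>2)"
    by (simp add: qf_bd[OF part] qf_Bm)
  also have "\<dots> \<le> (\<Sum>I\<in>P. coherence P U * (msk I x \<bullet> msk I x))"
    by (rule sum_mono) (rule coh_bound)
  also have "\<dots> = coherence P U * (x \<bullet> x)"
    by (simp add: sum_distrib_left[symmetric] sum_msk)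
  finally show ?thesis .
qed

lemma Qd_lower: "norm x \<le> 2 * norm (Qd *v x)"
proof -
  have q: "qf Qd x = x \<bullet> x - qf Bd x"
    by (simp add: Qd_eq qf_diff_mat qf_mat1)
  have "coherence P U * (x \<bullet> x) \<le> (1/2) * (x \<bullet> x)"
    using coh by (intro mult_right_mono) auto
  then have "(1/2) * (x \<bullet> x) \<le> qf Qd x"
    using qf_Bd_le[of x] q by linarith
  also have "\<dots> \<le> norm x * norm (Qd *v x)"
    unfolding qf_def by (rule norm_cauchy_schwarz)
  finally have "norm x * norm x \<le> norm x * (2 * norm (Qd *v x))"
    by (simp add: power2_norm_eq_inner[symmetric] power2_eq_square)
  show ?thesis
  proof (cases "norm x = 0")
    case True then show ?thesis by simp
  next
    case False
    then have "norm x > 0" by simp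
    with \<open>norm x * norm x \<le> _\<close> show ?thesis
      using mult_left_le_imp_le by blast
  qed
qed

lemma Qd_inv_ex: "\<exists>R. R ** Qd = mat 1"
proof -
  have "inj ((*v) Qd)"
  proof (rule injI)
    fix x y assume "Qd *v x = Qd *v y"
    then have "Qd *v (x - y) = 0" by (simp add: matrix_vector_mult_diff_distrib)
    then show "x = y" using Qd_lower[of "x - y"] by simp
  qed
  then show ?thesis using matrix_left_invertible_injective by blast
qed

definition "R = (SOME R. R ** Qd = mat 1)"

lemma R_left: "R ** Qd = mat 1"
  unfolding R_def using someI_ex[OF Qd_inv_ex] .

lemma R_right: "Qd ** R = mat 1"
  using R_left matrix_left_right_inverse by blast

lemma R_sym: "transpose R = R"
proof -
  have "transpose R ** Qd = mat 1"
    using arg_cong[OF R_right, of transpose] by (simp add: matrix_transpose_mul Qd_sym)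
  then have "transpose R = transpose R ** (Qd ** R)" by (simp add: R_right)
  also have "\<dots> = R" by (simp add: matrix_mul_assoc \<open>transpose R ** Qd = mat 1\<close>)
  finally show ?thesis .
qed

lemma Qd_bd: "bd P Qd = Qd"
  by (simp add: bd_idem)

lemma R_bd: "bd P R = R"
proof -
  have "Qd ** bd P R = mat 1"
    using bd_mult_left[OF part Qd_bd, of R] by (simp add: R_right bd_mat1[OF part])
  then have "R = R ** (Qd ** bd P R)" by simp
  also have "\<dots> = bd P R" by (simp add: matrix_mul_assoc R_left)
  finally show ?thesis by simp
qed

lemma R_norm: "norm (R *v x) \<le> 2 * norm x"
  using Qd_lower[of "R *v x"] by (simp add: matrix_vector_mul_assoc R_right)


definition "G D = bd P (Bm ** D ** Bm) - Bd ** D ** Bd"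
definition "T D = R ** (mat 1 - G D) ** R"
definition "C = {D. bd P D = D \<and> transpose D = D \<and> (\<forall>x. 0 \<le> qf D x) \<and> (\<forall>x. qf D x \<le> 4 * (x \<bullet> x))}"

lemma Bd_msk:
  assumes I: "I \<in> P"
  shows "msk I (Bd *v x) = msk I (pr (msk I x))"
proof -
  have "(Bd *v x)$i = (pr (msk I x))$i" if i: "i \<in> I" for i
  proof -
    have "(Bd *v x)$i = (\<Sum>j\<in>UNIV. (if blk P i j then Bm$i$j else 0) * x$j)"
      by (simp add: matrix_vector_mult_def bd_nth)
    also have "\<dots> = (\<Sum>j\<in>UNIV. Bm$i$j * (if j \<in> I then x$j else 0))"
      using blk_mem[OF part I i] by (auto intro!: sum.cong)
    also have "\<dots> = (Bm *v msk I x)$i"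
      by (simp add: matrix_vector_mult_def msk_nth)
    finally show ?thesis by (simp add: Bm_mult)
  qed
  then show ?thesis by (simp add: vec_eq_iff msk_nth)
qed

lemma qf_split:
  assumes D: "bd P D = D" "transpose D = D" and I: "I \<in> P"
  shows "qf D z - qf D (msk I z) = qf D (z - msk I z)"
proof -
  let ?a = "msk I z" let ?w = "z - msk I z"
  have c1: "?a \<bullet> (D *v ?w) = 0"
    by (rule cross_zero[OF part D(1) I]) (simp_all add: msk_idem msk_diff_self)
  have c2: "?w \<bullet> (D *v ?a) = 0"
    using c1 sym_dot[OF D(2), of ?w ?a] by (simp add: inner_commute)
  have "qf D z = qf D (?a + ?w)" by simp
  also have "\<dots> = qf D ?a + qf D ?w" by (simp only: qf_add_vec c1 c2 add_0_right)
  finally show ?thesis by simp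
qed

lemma qf_G:
  assumes D: "bd P D = D" "transpose D = D"
  shows "qf (G D) x = (\<Sum>I\<in>P. qf D (pr (msk I x) - msk I (pr (msk I x))))"
proof -
  have f: "qf (bd P (Bm ** D ** Bm)) x = (\<Sum>I\<in>P. qf D (pr (msk I x)))"
    by (simp add: qf_bd[OF part] qf_mult3[OF Bm_sym] Bm_mult)
  have "qf (Bd ** D ** Bd) x = qf (bd P D) (Bd *v x)"
    by (simp add: qf_mult3[OF Bd_sym] D(1))
  also have "\<dots> = (\<Sum>I\<in>P. qf D (msk I (pr (msk I x))))"
    by (simp add: qf_bd[OF part] Bd_msk)
  finally have s: "qf (Bd ** D ** Bd) x = (\<Sum>I\<in>P. qf D (msk I (pr (msk I x))))" .
  have "qf (G D) x = (\<Sum>I\<in>P. qf D (pr (msk I x)) - qf D (msk I (pr (msk I x))))"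
    by (simp add: G_def qf_diff_mat f s sum_subtractf)
  also have "\<dots> = (\<Sum>I\<in>P. qf D (pr (msk I x) - msk I (pr (msk I x))))"
    by (rule sum.cong[OF refl]) (rule qf_split[OF D])
  finally show ?thesis .
qed

lemma key_ineq:
  "4 * ((pr y - msk I (pr y)) \<bullet> (pr y - msk I (pr y))) \<le> msk I x \<bullet> msk I x" if "y = msk I x"
proof -
  let ?z = "pr y" let ?a = "msk I (pr y)"
  have "?z \<bullet> ?z = y \<bullet> ?z" using orth_proj_norm2[OF sub, of y] by (simp add: power2_norm_eq_inner)
  also have "\<dots> = y \<bullet> ?a" using msk_dot[of I x ?z] that by simp
  finally have zz: "?z \<bullet> ?z = y \<bullet> ?a" .
  have ww: "(?z - ?a) \<bullet> (?z - ?a) = ?z \<bullet> ?z - ?a \<bullet> ?a" using dot_split[of ?z I] by simp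
  have "0 \<le> (y - 2 *\<^sub>R ?a) \<bullet> (y - 2 *\<^sub>R ?a)" by simp
  then have "0 \<le> y \<bullet> y - 4 * (y \<bullet> ?a) + 4 * (?a \<bullet> ?a)"
    by (simp add: inner_diff_left inner_diff_right inner_commute algebra_simps)
  then show ?thesis using zz ww that by simp
qed

lemma G_bounds:
  assumes "D \<in> C"
  shows "0 \<le> qf (G D) x" "qf (G D) x \<le> x \<bullet> x"
proof -
  have D: "bd P D = D" "transpose D = D" "\<And>x. 0 \<le> qf D x" "\<And>x. qf D x \<le> 4 * (x \<bullet> x)"
    using assms unfolding C_def by auto
  show "0 \<le> qf (G D) x" unfolding qf_G[OF D(1,2)] by (rule sum_nonneg) (rule D(3))
  have "qf (G D) x \<le> (\<Sum>I\<in>P. msk I x \<bullet> msk I x)"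
    unfolding qf_G[OF D(1,2)]
  proof (rule sum_mono)
    fix I assume "I \<in> P"
    show "qf D (pr (msk I x) - msk I (pr (msk I x))) \<le> msk I x \<bullet> msk I x"
      using D(4) key_ineq[OF refl, of I x] order_trans by blast
  qed
  then show "qf (G D) x \<le> x \<bullet> x" by (simp add: sum_msk)
qed


lemma G_bd: assumes "bd P D = D" shows "bd P (G D) = G D"
proof -
  have "bd P (Bd ** D ** Bd) = Bd ** D ** Bd"
    using bd_mult_right[OF part bd_idem, of "Bd ** D" Bm] bd_mult_left[OF part bd_idem, of Bm D] assms
    by simp
  then show ?thesis by (simp add: G_def bd_diff bd_idem)
qed

lemma G_sym: assumes "transpose D = D" shows "transpose (G D) = G D"
  by (simp add: G_def transpose_diff transpose_bd matrix_transpose_mul Bm_sym Bd_sym assms matrix_mul_assoc)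

lemma T_in: assumes "D \<in> C" shows "T D \<in> C"
proof -
  have D: "bd P D = D" "transpose D = D"
    using assms unfolding C_def by auto
  let ?M = "mat 1 - G D"
  have M: "bd P ?M = ?M" using G_bd[OF D(1)] by (simp add: bd_diff bd_mat1[OF part])
  have Ms: "transpose ?M = ?M" using G_sym[OF D(2)] by (simp add: transpose_diff)
  have "bd P (T D) = T D"
    unfolding T_def using bd_mult_right[OF part R_bd, of "R ** ?M"] bd_mult_left[OF part R_bd, of ?M] M
    by simp
  moreover have "transpose (T D) = T D"
    unfolding T_def by (simp add: matrix_transpose_mul R_sym Ms matrix_mul_assoc)
  moreover have "0 \<le> qf (T D) x \<and> qf (T D) x \<le> 4 * (x \<bullet> x)" for x
  proof -
    have q: "qf (T D) x = (R *v x) \<bullet> (R *v x) - qf (G D) (R *v x)"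
      unfolding T_def by (simp add: qf_mult3[OF R_sym] qf_diff_mat qf_mat1)
    have "(R *v x) \<bullet> (R *v x) = (norm (R *v x))\<^sup>2" by (simp add: power2_norm_eq_inner)
    also have "\<dots> \<le> (2 * norm x)\<^sup>2" using R_norm[of x] by (intro power_mono) auto
    also have "\<dots> = 4 * (x \<bullet> x)" by (simp add: power2_eq_square power2_norm_eq_inner[symmetric])
    finally show ?thesis using q G_bounds[OF assms, of "R *v x"] by linarith
  qed
  ultimately show ?thesis unfolding C_def by blast
qed

lemma fixed_bd:
  assumes D: "bd P D = D" and fx: "T D = D"
  shows "bd P ((mat 1 - Bm) ** D ** (mat 1 - Bm)) = mat 1"
proof -
  let ?M = "mat 1 - G D"
  have "Qd ** D ** Qd = Qd ** (R ** ?M ** R) ** Qd" using fx unfolding T_def by simp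
  also have "\<dots> = (Qd ** R) ** ?M ** (R ** Qd)" by (simp add: matrix_mul_assoc)
  also have "\<dots> = ?M" by (simp add: R_left R_right)
  finally have e: "Qd ** D ** Qd = ?M" .
  have "bd P ((mat 1 - Bm) ** D ** (mat 1 - Bm)) = D - Bd ** D - D ** Bd + bd P (Bm ** D ** Bm)"
    by (simp add: expand3 bd_add bd_diff D bd_mult_right[OF part D] bd_mult_left[OF part D])
  also have "\<dots> = Qd ** D ** Qd + G D"
    by (simp add: Qd_eq expand3 G_def)
  also have "\<dots> = mat 1" by (simp add: e)
  finally show ?thesis .
qed


lemma cont_T: "continuous_on S T"
  unfolding T_def G_def bd_def matrix_matrix_mult_def
  by (intro continuous_intros)

lemma entry_bound:
  assumes "D \<in> C" shows "\<bar>D$i$j\<bar> \<le> 4"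
proof -
  have D: "transpose D = D" "\<And>x. 0 \<le> qf D x" "\<And>x. qf D x \<le> 4 * (x \<bullet> x)"
    using assms unfolding C_def by auto
  have dii: "qf D (axis i 1) = D$i$i" for i by (simp add: qf_def axis_mat_axis)
  have dji: "D$j$i = D$i$j" using D(1) by (metis transpose_def vec_lambda_beta)
  have ii: "0 \<le> D$i$i" "D$i$i \<le> 4" "0 \<le> D$j$j" "D$j$j \<le> 4"
    using D(2)[of "axis i 1"] D(3)[of "axis i 1"] D(2)[of "axis j 1"] D(3)[of "axis j 1"]
    by (simp_all add: dii inner_axis_axis)
  show ?thesis
  proof (cases "i = j")
    case True then show ?thesis using ii by simp
  next
    case False
    have n: "(axis i (1::real) + axis j 1) \<bullet> (axis i 1 + axis j 1) = (2::real)"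
      "(axis i (1::real) - axis j 1) \<bullet> (axis i 1 - axis j 1) = (2::real)"
      using False by (simp_all add: inner_add_left inner_add_right inner_diff_left inner_diff_right inner_axis_axis inner_real_def)
    have p: "qf D (axis i 1 + axis j 1) = D$i$i + D$j$j + 2 * D$i$j"
      by (simp add: qf_add_vec dii axis_mat_axis dji)
    have m: "qf D (axis i 1 - axis j 1) = D$i$i + D$j$j - 2 * D$i$j"
      by (simp add: qf_diff_vec dii axis_mat_axis dji)
    show ?thesis
      using D(2)[of "axis i 1 + axis j 1"] D(2)[of "axis i 1 - axis j 1"] p m ii by linarith
  qed
qed

lemma C_bounded: "bounded C"
proof -
  have "norm D \<le> (\<Sum>i\<in>(UNIV::'n set). \<Sum>j\<in>(UNIV::'n set). (4::real))" if "D \<in> C" for D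
  proof -
    have "norm D \<le> (\<Sum>i\<in>UNIV. norm (D$i))" unfolding norm_vec_def by (rule L2_set_le_sum) simp
    also have "\<dots> \<le> (\<Sum>i\<in>UNIV. \<Sum>j\<in>UNIV. \<bar>D$i$j\<bar>)"
      by (rule sum_mono) (rule norm_le_l1_cart)
    also have "\<dots> \<le> (\<Sum>i\<in>(UNIV::'n set). \<Sum>j\<in>(UNIV::'n set). (4::real))"
      by (rule sum_mono, rule sum_mono, rule entry_bound[OF that])
    finally show ?thesis .
  qed
  then show ?thesis unfolding bounded_iff by blast
qed

lemma C_closed: "closed C"
proof -
  have eq: "C = ({D. bd P D = D} \<inter> {D. transpose D = D}) \<inter> ((\<Inter>x\<in>UNIV. {D. 0 \<le> qf D x}) \<inter> (\<Inter>x\<in>UNIV. {D. qf D x \<le> 4 * (x \<bullet> x)}))"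
    unfolding C_def by auto
  have c1: "closed {D. bd P D = D}"
    by (rule closed_Collect_eq[OF cont_bd continuous_on_id])
  have c2: "closed {D::real^'n^'n. transpose D = D}"
    by (rule closed_Collect_eq[OF cont_transpose continuous_on_id])
  have c3: "closed (\<Inter>x\<in>UNIV. {D. 0 \<le> qf D x})"
    by (intro closed_INT ballI closed_Collect_le[OF continuous_on_const cont_qf])
  have c4: "closed (\<Inter>x\<in>UNIV. {D. qf D x \<le> 4 * (x \<bullet> x)})"
    by (intro closed_INT ballI closed_Collect_le[OF cont_qf continuous_on_const])
  show ?thesis unfolding eq by (intro closed_Int c1 c2 c3 c4)
qed

lemma C_convex: "convex C"
  unfolding convex_def
proof (intro ballI allI impI)
  fix D1 D2 :: "real^'n^'n" and u v :: real
  assume D1: "D1 \<in> C" and D2: "D2 \<in> C" and uv: "0 \<le> u" "0 \<le> v" "u + v = 1"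
  have d1: "bd P D1 = D1" "transpose D1 = D1" "\<And>x. 0 \<le> qf D1 x" "\<And>x. qf D1 x \<le> 4 * (x \<bullet> x)"
    using D1 unfolding C_def by auto
  have d2: "bd P D2 = D2" "transpose D2 = D2" "\<And>x. 0 \<le> qf D2 x" "\<And>x. qf D2 x \<le> 4 * (x \<bullet> x)"
    using D2 unfolding C_def by auto
  have "0 \<le> qf (u *\<^sub>R D1 + v *\<^sub>R D2) x \<and> qf (u *\<^sub>R D1 + v *\<^sub>R D2) x \<le> 4 * (x \<bullet> x)" for x
  proof -
    have a: "0 \<le> u * qf D1 x" "0 \<le> v * qf D2 x" using uv d1(3) d2(3) by auto
    have b: "u * qf D1 x \<le> u * (4 * (x \<bullet> x))" "v * qf D2 x \<le> v * (4 * (x \<bullet> x))"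
      using uv d1(4) d2(4) by (auto intro: mult_left_mono)
    have "u * (4 * (x \<bullet> x)) + v * (4 * (x \<bullet> x)) = 4 * (x \<bullet> x)"
      using uv(3) by (simp add: distrib_right[symmetric])
    then show ?thesis using a b by (simp add: qf_lin)
  qed
  then show "u *\<^sub>R D1 + v *\<^sub>R D2 \<in> C"
    unfolding C_def using d1 d2 by (simp add: bd_add bd_scaleR transpose_add transpose_scalar)
qed

lemma C_ne: "0 \<in> C"
  unfolding C_def by (simp add: bd_zero qf_def transpose_def vec_eq_iff)

lemma main: "realizable P U"
proof -
  have cC: "compact C" using C_bounded C_closed by (simp add: compact_eq_bounded_closed)
  have nC: "C \<noteq> {}" using C_ne by auto
  have TC: "T \<in> C \<rightarrow> C" using T_in by auto
  obtain D where DC: "D \<in> C" and fx: "T D = D"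
    using brouwer[OF cC C_convex nC cont_T TC] by blast
  have D: "bd P D = D" "transpose D = D" "\<And>x. 0 \<le> qf D x"
    using DC unfolding C_def by auto
  let ?Q = "mat 1 - Bm"
  define Y where "Y = ?Q ** D ** ?Q"
  have Qs: "transpose ?Q = ?Q" by (simp add: transpose_diff Bm_sym)
  have Yb: "bd P Y = mat 1" unfolding Y_def by (rule fixed_bd[OF D(1) fx])
  have "psd Y"
    unfolding psd_def
  proof
    show "transpose Y = Y" unfolding Y_def by (simp add: matrix_transpose_mul Qs D(2) matrix_mul_assoc)
    show "\<forall>x. 0 \<le> x \<bullet> (Y *v x)"
      using D(3) qf_mult3[OF Qs] unfolding Y_def qf_def by simp
  qed
  moreover have "\<forall>I\<in>P. \<forall>i\<in>I. \<forall>j\<in>I. Y $ i $ j = (if i = j then 1 else 0)"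
  proof (intro ballI)
    fix I i j assume "I \<in> P" "i \<in> I" "j \<in> I"
    then have "blk P i j" unfolding blk_def by auto
    then have "Y$i$j = bd P Y $i$j" by (simp add: bd_nth)
    then show "Y $ i $ j = (if i = j then 1 else 0)" by (simp add: Yb mat_def)
  qed
  moreover have "\<forall>u\<in>U. Y *v u = 0"
  proof
    fix u assume "u \<in> U"
    then have "?Q *v u = 0" by (simp add: matrix_vector_mult_diff_rdistrib Bm_mult orth_proj_id[OF sub])
    then show "Y *v u = 0" unfolding Y_def by (simp add: matrix_vector_mul_assoc[symmetric])
  qed
  ultimately show ?thesis unfolding realizable_def elliptope_P_def by blast
qed

end

theorem corollary5p11:
  fixes P :: "'n::finite set set" and U :: "(real^'n) set"
  assumes "is_partition P" and "subspace U"
    and "coherence P U < 1/2"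
  shows "realizable P U"
proof -
  interpret realz P U by (unfold_locales) (use assms in auto)
  show ?thesis by (rule main)
qed

end
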